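(* Let $d=\infty$, $C>0$ and ${\boldsymbol\gamma}\in\mathcal M_d$. Then $T^\downarrow_{d,C}{\boldsymbol\gamma}\in\mathcal S_{d,C}$, and for every $u\in\mathcal U_d$ the iterated limit $\lim_{r\to\infty}\lim_{s\to\infty}(\Delta_{[s]\setminus[r]}{\boldsymbol\gamma})_u$ exists and $$\big((T^\uparrow_{d,C}\circ T^\downarrow_{d,C}){\boldsymbol\gamma}\big)_u=\lim_{r\to\infty}\lim_{s\to\infty}(\Delta_{[s]\setminus[r]}{\boldsymbol\gamma})_u\le\gamma_u.$$
   Context: Let $d\in\mathbb N\cup\{\infty\}$. Write $[d]=\{1,\dots,d\}$ if $d\in\mathbb N$ and $[d]=\mathbb N$ if $d=\infty$; for $s\in\mathbb N$, $[s]=\{1,\dots,s\}$. Let $\mathcal U_d$ be the set of all finite subsets of $[d]$. The set of weights is $\mathcal W_d=\{{\boldsymbol\gamma}\in\mathbb R^{\mathcal U_d}:{\boldsymbol\gamma}\ge\mathbf 0\}$ (inequalities componentwise). For $v\in\mathcal U_d$, $(\Delta_v{\boldsymbol\gamma})_u=\sum_{w\subseteq v}(-1)^{|w|}\gamma_{u\cup w}$. $\mathcal M_d$ is the set of weights with $\Delta_v{\boldsymbol\gamma}\ge\mathbf 0$ for all $v\in\mathcal U_d$ (completely monotone weights). For $C>0$, $\mathcal S_{d,C}=\{{\boldsymbol\gamma}\in\mathcal W_d:\sum_{v}C^{2|v|}\gamma_v<\infty\}$, $T^\uparrow_{d,C}\colon\mathcal S_{d,C}\to\mathcal W_d$, $(T^\uparrow_{d,C}{\boldsymbol\gamma})_u=\sum_{v\supseteq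 u}C^{2|v|}\gamma_v$, and for $d=\infty$, $T^\downarrow_{d,C}\colon\mathcal M_d\to\mathcal W_d$, $(T^\downarrow_{d,C}{\boldsymbol\gamma})_u=C^{-2|u|}\lim_{s\to\infty}(\Delta_{[s]\setminus u}{\boldsymbol\gamma})_u$ (the limit exists since the sequence is non-increasing in $[0,\gamma_u]$). *)

theory Defs
  imports "HOL-Analysis.Analysis"
begin

text \<open>Case d = infinity: [d] = {1,2,...}. Weights are functions on sets of naturals;
  only their values on the index set U (finite subsets of {1..}) matter.\<close>

definition U_inf :: "nat set set" where
  "U_inf = {u. finite u \<and> u \<subseteq> {1..}}"

definition Delta :: "nat set \<Rightarrow> (nat set \<Rightarrow> real) \<Rightarrow> nat set \<Rightarrow> real" where
  "Delta v \<gamma> u = (\<Sum>w\<in>Pow v. (-1) ^ card w * \<gamma> (u \<union> w))"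

definition weights :: "(nat set \<Rightarrow> real) set" where
  "weights = {\<gamma>. \<forall>u\<in>U_inf. 0 \<le> \<gamma> u}"

definition compl_monotone :: "(nat set \<Rightarrow> real) set" where
  "compl_monotone = {\<gamma>. \<gamma> \<in> weights \<and> (\<forall>v\<in>U_inf. \<forall>u\<in>U_inf. 0 \<le> Delta v \<gamma> u)}"

definition S_space :: "real \<Rightarrow> (nat set \<Rightarrow> real) set" where
  "S_space C = {\<gamma>. \<gamma> \<in> weights \<and> (\<lambda>v. C ^ (2 * card v) * \<gamma> v) summable_on U_inf}"

definition T_up :: "real \<Rightarrow> (nat set \<Rightarrow> real) \<Rightarrow> nat set \<Rightarrow> real" where
  "T_up C \<gamma> u = (\<Sum>\<^sub>\<infinity>v\<in>{v\<in>U_inf. u \<subseteq> v}. C ^ (2 * card v) * \<gamma> v)"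

definition T_down :: "real \<Rightarrow> (nat set \<Rightarrow> real) \<Rightarrow> nat set \<Rightarrow> real" where
  "T_down C \<gamma> u = inverse (C ^ (2 * card u)) * lim (\<lambda>s. Delta ({1..s} - u) \<gamma> u)"

end

theory Submission
  imports Defs
begin

lemma Delta_insert:
  assumes "k \<notin> v" "finite v"
  shows "Delta (insert k v) g u = Delta v g u - Delta v g (insert k u)"
proof -
  have disj: "Pow v \<inter> insert k ` Pow v = {}" using assms(1) by auto
  have inj: "inj_on (insert k) (Pow v)" using assms(1) by (intro inj_onI) (metis PowD insert_ident subsetD)
  have "Delta (insert k v) g u = (\<Sum>w\<in>Pow v. (-1) ^ card w * g (u \<union> w))
      + (\<Sum>w\<in>insert k ` Pow v. (-1) ^ card w * g (u \<union> w))"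
    unfolding Delta_def Pow_insert using assms(2) disj by (simp add: sum.union_disjoint)
  also have "(\<Sum>w\<in>insert k ` Pow v. (-1) ^ card w * g (u \<union> w))
      = (\<Sum>w\<in>Pow v. (-1) ^ card (insert k w) * g (u \<union> insert k w))"
    using inj by (simp add: sum.reindex)
  also have "\<dots> = (\<Sum>w\<in>Pow v. - ((-1) ^ card w * g (insert k u \<union> w)))"
  proof (rule sum.cong)
    fix w assume "w \<in> Pow v"
    then have "finite w" "k \<notin> w" using assms finite_subset by auto
    then show "(-1) ^ card (insert k w) * g (u \<union> insert k w) = - ((-1) ^ card w * g (insert k u \<union> w))"
      by simp
  qed simp
  finally show ?thesis unfolding Delta_def by (simp add: sum_negf)
qed

lemma Delta_empty: "Delta {} g u = g u"
  unfolding Delta_def by simp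

lemma Delta_nonneg:
  assumes "g \<in> compl_monotone" "finite v" "v \<subseteq> {1..}" "u \<in> U_inf"
  shows "0 \<le> Delta v g u"
  using assms unfolding compl_monotone_def U_inf_def by auto

lemma Delta_mono_aux:
  assumes "g \<in> compl_monotone" "finite A"
  shows "finite v \<Longrightarrow> v \<union> A \<subseteq> {1..} \<Longrightarrow> u \<in> U_inf \<Longrightarrow> Delta (v \<union> A) g u \<le> Delta v g u"
  using assms(2)
proof (induction A)
  case empty
  then show ?case by simp
next
  case (insert k A)
  show ?case
  proof (cases "k \<in> v")
    case True
    then have "v \<union> insert k A = v \<union> A" by auto
    then show ?thesis using insert by auto
  next
    case False
    have eq: "v \<union> insert k A = insert k (v \<union> A)" by auto
    have ku: "insert k u \<in> U_inf" using insert.prems unfolding U_inf_def by auto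
    have "Delta (v \<union> insert k A) g u = Delta (v \<union> A) g u - Delta (v \<union> A) g (insert k u)"
      unfolding eq using False insert by (intro Delta_insert) auto
    also have "\<dots> \<le> Delta (v \<union> A) g u"
      using Delta_nonneg[OF assms(1) _ _ ku, of "v \<union> A"] insert by auto
    also have "\<dots> \<le> Delta v g u" using insert by auto
    finally show ?thesis .
  qed
qed

lemma Delta_mono:
  assumes "g \<in> compl_monotone" "v \<subseteq> v'" "finite v'" "v' \<subseteq> {1..}" "u \<in> U_inf"
  shows "Delta v' g u \<le> Delta v g u"
proof -
  have "v' = v \<union> (v' - v)" using assms by auto
  then show ?thesis using Delta_mono_aux[OF assms(1), of "v' - v" v u] assms
    by (metis finite_Diff finite_subset)
qed

lemma Delta_split:
  assumes "finite B" 
  shows "\<And>u. u \<inter> B = {} \<Longrightarrow> u \<union> B \<subseteq> S \<Longrightarrow> finite S \<Longrightarrow>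
    Delta (S - (u \<union> B)) g u = (\<Sum>c\<in>Pow B. Delta (S - (u \<union> c)) g (u \<union> c))"
  using assms
proof (induction B)
  case empty
  then show ?case by simp
next
  case (insert k B)
  have kS: "k \<in> S" "k \<notin> u" using insert by auto
  define D where "D = S - (u \<union> insert k B)"
  have D1: "insert k D = S - (u \<union> B)" using kS insert.hyps unfolding D_def by auto
  have D2: "D = S - (insert k u \<union> B)" unfolding D_def by auto
  have "Delta (insert k D) g u = Delta D g u - Delta D g (insert k u)"
    by (rule Delta_insert) (auto simp: D_def insert.prems)
  then have "Delta D g u = Delta (S - (u \<union> B)) g u + Delta (S - (insert k u \<union> B)) g (insert k u)"
    using D1 D2 by simp
  also have "\<dots> = (\<Sum>c\<in>Pow B. Delta (S - (u \<union> c)) g (u \<union> c))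
       + (\<Sum>c\<in>Pow B. Delta (S - (insert k u \<union> c)) g (insert k u \<union> c))"
    using insert.IH[of u] insert.IH[of "insert k u"] insert.prems insert.hyps by auto
  also have "(\<Sum>c\<in>Pow B. Delta (S - (insert k u \<union> c)) g (insert k u \<union> c))
     = (\<Sum>c\<in>insert k ` Pow B. Delta (S - (u \<union> c)) g (u \<union> c))"
  proof -
    have inj: "inj_on (insert k) (Pow B)" using insert.hyps by (intro inj_onI) (metis PowD insert_ident subsetD)
    show ?thesis using inj by (simp add: sum.reindex)
  qed
  also have "(\<Sum>c\<in>Pow B. Delta (S - (u \<union> c)) g (u \<union> c)) + \<dots>
     = (\<Sum>c\<in>Pow (insert k B). Delta (S - (u \<union> c)) g (u \<union> c))"
    unfolding Pow_insert using insert.hyps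
    by (subst sum.union_disjoint) auto
  finally show ?case unfolding D_def .
qed

lemma Delta_seq:
  assumes "g \<in> compl_monotone" "u \<in> U_inf"
  obtains L where "(\<lambda>s. Delta ({1..s} - A) g u) \<longlonglongrightarrow> L" "\<forall>s. L \<le> Delta ({1..s} - A) g u" "0 \<le> L"
proof -
  have dec: "decseq (\<lambda>s. Delta ({1..s} - A) g u)"
    by (rule decseq_SucI, rule Delta_mono[OF assms(1) _ _ _ assms(2)]) auto
  have nn: "\<forall>s. 0 \<le> Delta ({1..s} - A) g u"
  proof
    fix s show "0 \<le> Delta ({1..s} - A) g u"
      by (rule Delta_nonneg[OF assms(1) _ _ assms(2)]) auto
  qed
  obtain L where
    L: "(\<lambda>s. Delta ({1..s} - A) g u) \<longlonglongrightarrow> L" "\<forall>s. L \<le> Delta ({1..s} - A) g u"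
    by (rule decseq_convergent[OF dec nn])
  moreover have "0 \<le> L" using L(1) nn by (intro LIMSEQ_le_const) auto
  ultimately show ?thesis using that by blast
qed

definition aa :: "(nat set \<Rightarrow> real) \<Rightarrow> nat set \<Rightarrow> real" where
  "aa g v = lim (\<lambda>s. Delta ({1..s} - v) g v)"

lemma aa_lim:
  assumes "g \<in> compl_monotone" "v \<in> U_inf"
  shows "(\<lambda>s. Delta ({1..s} - v) g v) \<longlonglongrightarrow> aa g v" "0 \<le> aa g v"
proof -
  obtain L where L: "(\<lambda>s. Delta ({1..s} - v) g v) \<longlonglongrightarrow> L" "0 \<le> L"
    using Delta_seq[OF assms, of v] by blast
  have "aa g v = L" unfolding aa_def using L(1) by (rule limI)
  then show "(\<lambda>s. Delta ({1..s} - v) g v) \<longlonglongrightarrow> aa g v" "0 \<le> aa g v" using L by auto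
qed

lemma sub_U: "v \<subseteq> {1..(r::nat)} \<Longrightarrow> v \<in> U_inf"
  unfolding U_inf_def by (auto intro: finite_subset)

lemma bound_fin:
  assumes "finite F" "F \<subseteq> U_inf"
  shows "\<exists>r. \<forall>v\<in>F. v \<subseteq> {1..r}"
proof -
  have "finite (\<Union>F)" using assms unfolding U_inf_def by auto
  then obtain m where m: "\<forall>n\<in>\<Union>F. n \<le> m" using finite_nat_set_iff_bounded_le by blast
  have "\<forall>v\<in>F. v \<subseteq> {1..m}" using m assms(2) unfolding U_inf_def by (force simp: subset_iff)
  then show ?thesis by blast
qed

lemma partial_lim:
  assumes "g \<in> compl_monotone" "u \<in> U_inf" "u \<subseteq> {1..r}"
  shows "(\<lambda>s. Delta ({1..s} - {1..r}) g u) \<longlonglongrightarrow> (\<Sum>v\<in>{v. v \<subseteq> {1..r} \<and> u \<subseteq> v}. aa g v)"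
proof -
  let ?B = "{1..r} - u"
  have ev: "\<forall>\<^sub>F s in sequentially. (\<Sum>c\<in>Pow ?B. Delta ({1..s} - (u \<union> c)) g (u \<union> c)) = Delta ({1..s} - {1..r}) g u"
  proof (rule eventually_sequentiallyI[of r])
    fix s assume "r \<le> s"
    have "Delta ({1..s} - (u \<union> ?B)) g u = (\<Sum>c\<in>Pow ?B. Delta ({1..s} - (u \<union> c)) g (u \<union> c))"
      by (rule Delta_split) (use \<open>r \<le> s\<close> assms in auto)
    moreover have "u \<union> ?B = {1..r}" using assms by auto
    ultimately show "(\<Sum>c\<in>Pow ?B. Delta ({1..s} - (u \<union> c)) g (u \<union> c)) = Delta ({1..s} - {1..r}) g u" by simp
  qed
  have "(\<lambda>s. \<Sum>c\<in>Pow ?B. Delta ({1..s} - (u \<union> c)) g (u \<union> c)) \<longlonglongrightarrow> (\<Sum>c\<in>Pow ?B. aa g (u \<union> c))"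
  proof (rule tendsto_sum)
    fix c assume "c \<in> Pow ?B"
    then have "u \<union> c \<in> U_inf" using assms by (intro sub_U[of _ r]) auto
    then show "(\<lambda>s. Delta ({1..s} - (u \<union> c)) g (u \<union> c)) \<longlonglongrightarrow> aa g (u \<union> c)"
      by (rule aa_lim[OF assms(1)])
  qed
  then have "(\<lambda>s. Delta ({1..s} - {1..r}) g u) \<longlonglongrightarrow> (\<Sum>c\<in>Pow ?B. aa g (u \<union> c))"
    using ev by (rule Lim_transform_eventually)
  moreover have "(\<Sum>c\<in>Pow ?B. aa g (u \<union> c)) = (\<Sum>v\<in>{v. v \<subseteq> {1..r} \<and> u \<subseteq> v}. aa g v)"
  proof -
    have inj: "inj_on (\<lambda>c. u \<union> c) (Pow ?B)" by (intro inj_onI) blast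
    have img: "(\<lambda>c. u \<union> c) ` Pow ?B = {v. v \<subseteq> {1..r} \<and> u \<subseteq> v}"
    proof
      show "{v. v \<subseteq> {1..r} \<and> u \<subseteq> v} \<subseteq> (\<lambda>c. u \<union> c) ` Pow ?B"
      proof
        fix v assume "v \<in> {v. v \<subseteq> {1..r} \<and> u \<subseteq> v}"
        then have "v = u \<union> (v - u)" "v - u \<in> Pow ?B" by auto
        then show "v \<in> (\<lambda>c. u \<union> c) ` Pow ?B" by blast
      qed
    qed (use assms in auto)
    show ?thesis using sum.reindex[OF inj, of "aa g"] img by (simp add: comp_def)
  qed
  ultimately show ?thesis by simp
qed

lemma aa_nonneg_sub: "g \<in> compl_monotone \<Longrightarrow> v \<subseteq> {Suc 0..r} \<Longrightarrow> 0 \<le> aa g v"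
  by (metis One_nat_def aa_lim(2) sub_U)

lemma G_facts:
  assumes g: "g \<in> compl_monotone" and u: "u \<in> U_inf"
  defines "G \<equiv> \<lambda>r. \<Sum>v\<in>{v. v \<subseteq> {1..r} \<and> u \<subseteq> v}. aa g v"
  shows "incseq G" "\<And>r. G r \<le> g u"
proof -
  show inc: "incseq G"
  proof (rule incseq_SucI)
    fix r
    show "G r \<le> G (Suc r)" unfolding G_def
      by (rule sum_mono2) (auto intro: aa_nonneg_sub[OF g])
  qed
  obtain r0 where r0: "u \<subseteq> {1..r0}" using bound_fin[of "{u}"] u by auto
  have le: "G r \<le> g u" if "u \<subseteq> {1..r}" for r
  proof -
    obtain L where L: "(\<lambda>s. Delta ({1..s} - {1..r}) g u) \<longlonglongrightarrow> L" "\<forall>s. L \<le> Delta ({1..s} - {1..r}) g u"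
      using Delta_seq[OF g u, of "{1..r}"] by blast
    have "G r = L" unfolding G_def using partial_lim[OF g u that] L(1) by (rule LIMSEQ_unique)
    also have "\<dots> \<le> Delta ({1..0} - {1..r}) g u" using L(2) by blast
    also have "\<dots> = g u" by (simp add: Delta_empty)
    finally show ?thesis .
  qed
  fix r
  have "G r \<le> G (max r r0)" using inc by (simp add: incseq_def)
  have "u \<subseteq> {1..max r r0}" using r0 by (auto simp: subset_iff)
  then have "G (max r r0) \<le> g u" by (rule le)
  with \<open>G r \<le> G (max r r0)\<close> show "G r \<le> g u" by linarith
qed

theorem mainTheorem3:
  fixes C :: real and \<gamma> :: "nat set \<Rightarrow> real"
  assumes "C > 0" and "\<gamma> \<in> compl_monotone"
  shows "T_down C \<gamma> \<in> S_space C \<and>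
    (\<forall>u\<in>U_inf.
       (\<forall>r. convergent (\<lambda>s. Delta ({1..s} - {1..r}) \<gamma> u)) \<and>
       convergent (\<lambda>r. lim (\<lambda>s. Delta ({1..s} - {1..r}) \<gamma> u)) \<and>
       T_up C (T_down C \<gamma>) u = lim (\<lambda>r. lim (\<lambda>s. Delta ({1..s} - {1..r}) \<gamma> u)) \<and>
       lim (\<lambda>r. lim (\<lambda>s. Delta ({1..s} - {1..r}) \<gamma> u)) \<le> \<gamma> u)"
proof -
  note g = assms(2)
  have Ta: "C ^ (2 * card v) * T_down C \<gamma> v = aa \<gamma> v" for v
    unfolding T_down_def aa_def using assms(1) by simp
  have anon: "0 \<le> aa \<gamma> v" if "v \<in> U_inf" for v using aa_lim(2)[OF g that] .
  have summ: "aa \<gamma> summable_on U_inf"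
  proof (rule nonneg_bdd_above_summable_on)
    show "bdd_above (sum (aa \<gamma>) ` {F. F \<subseteq> U_inf \<and> finite F})"
    proof (rule bdd_aboveI2)
      fix F assume F: "F \<in> {F. F \<subseteq> U_inf \<and> finite F}"
      then obtain r where r: "\<forall>v\<in>F. v \<subseteq> {1..r}" using bound_fin by blast
      have "sum (aa \<gamma>) F \<le> (\<Sum>v\<in>{v. v \<subseteq> {1..r} \<and> {} \<subseteq> v}. aa \<gamma> v)"
        using F r by (intro sum_mono2) (auto intro: aa_nonneg_sub[OF g])
      also have "\<dots> \<le> \<gamma> {}" using G_facts(2)[OF g, of "{}"] by (simp add: U_inf_def)
      finally show "sum (aa \<gamma>) F \<le> \<gamma> {}" .
    qed
  qed (rule anon)
  have part1: "T_down C \<gamma> \<in> S_space C"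
    unfolding S_space_def weights_def
  proof (intro CollectI conjI ballI)
    fix u assume "u \<in> U_inf"
    then show "0 \<le> T_down C \<gamma> u" unfolding T_down_def aa_def[symmetric]
      using anon assms(1) by simp
  next
    show "(\<lambda>v. C ^ (2 * card v) * T_down C \<gamma> v) summable_on U_inf"
      unfolding Ta by (rule summ)
  qed
  have part2: "(\<forall>r. convergent (\<lambda>s. Delta ({1..s} - {1..r}) \<gamma> u)) \<and>
       convergent (\<lambda>r. lim (\<lambda>s. Delta ({1..s} - {1..r}) \<gamma> u)) \<and>
       T_up C (T_down C \<gamma>) u = lim (\<lambda>r. lim (\<lambda>s. Delta ({1..s} - {1..r}) \<gamma> u)) \<and>
       lim (\<lambda>r. lim (\<lambda>s. Delta ({1..s} - {1..r}) \<gamma> u)) \<le> \<gamma> u" if u: "u \<in> U_inf" for u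
  proof -
    define G where "G = (\<lambda>r. \<Sum>v\<in>{v. v \<subseteq> {1..r} \<and> u \<subseteq> v}. aa \<gamma> v)"
    have Ginc: "incseq G" and Gle: "\<And>r. G r \<le> \<gamma> u"
      using G_facts[OF g u] unfolding G_def by auto
    obtain L where L: "G \<longlonglongrightarrow> L" "\<forall>r. G r \<le> L"
      using incseq_convergent[OF Ginc] Gle by blast
    have c1: "\<forall>r. convergent (\<lambda>s. Delta ({1..s} - {1..r}) \<gamma> u)"
    proof
      fix r
      obtain M where "(\<lambda>s. Delta ({1..s} - {1..r}) \<gamma> u) \<longlonglongrightarrow> M"
        using Delta_seq[OF g u, of "{1..r}"] by blast
      then show "convergent (\<lambda>s. Delta ({1..s} - {1..r}) \<gamma> u)" unfolding convergent_def by blast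
    qed
    obtain r0 where r0: "u \<subseteq> {1..r0}" using bound_fin[of "{u}"] u by auto
    have ev: "\<forall>\<^sub>F r in sequentially. G r = lim (\<lambda>s. Delta ({1..s} - {1..r}) \<gamma> u)"
    proof (rule eventually_sequentiallyI[of r0])
      fix r assume "r0 \<le> r"
      then have "u \<subseteq> {1..r}" using r0 by auto
      from partial_lim[OF g u this] show "G r = lim (\<lambda>s. Delta ({1..s} - {1..r}) \<gamma> u)"
        unfolding G_def by (simp add: limI)
    qed
    have hL: "(\<lambda>r. lim (\<lambda>s. Delta ({1..s} - {1..r}) \<gamma> u)) \<longlonglongrightarrow> L"
      using L(1) ev by (rule Lim_transform_eventually)
    then have limh: "lim (\<lambda>r. lim (\<lambda>s. Delta ({1..s} - {1..r}) \<gamma> u)) = L" by (rule limI)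
    have Lle: "L \<le> \<gamma> u" using L(1) Gle by (intro LIMSEQ_le_const2) auto
    define V where "V = {v\<in>U_inf. u \<subseteq> v}"
    have sV: "aa \<gamma> summable_on V"
      by (rule summable_on_subset_banach[OF summ]) (auto simp: V_def)
    have bdd: "\<And>F. finite F \<Longrightarrow> F \<subseteq> V \<Longrightarrow> sum (aa \<gamma>) F \<le> L"
    proof -
      fix F assume F: "finite F" "F \<subseteq> V"
      then obtain r where r: "\<forall>v\<in>F. v \<subseteq> {1..r}" using bound_fin[of F] by (auto simp: V_def)
      have "sum (aa \<gamma>) F \<le> G r" unfolding G_def
        using F r by (intro sum_mono2) (auto intro: aa_nonneg_sub[OF g] simp: V_def)
      also have "\<dots> \<le> L" using L(2) by blast
      finally show "sum (aa \<gamma>) F \<le> L" .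
    qed
    have "T_up C (T_down C \<gamma>) u = infsum (aa \<gamma>) V"
      unfolding T_up_def Ta V_def ..
    also have "\<dots> = Sup (sum (aa \<gamma>) ` {F. finite F \<and> F \<subseteq> V})"
      by (rule infsum_nonneg_is_SUPREMUM_real[OF sV]) (auto simp: V_def intro: anon)
    also have "\<dots> = L"
    proof (rule antisym)
      show "Sup (sum (aa \<gamma>) ` {F. finite F \<and> F \<subseteq> V}) \<le> L"
        by (rule cSup_least) (auto intro: bdd)
      have bddA: "bdd_above (sum (aa \<gamma>) ` {F. finite F \<and> F \<subseteq> V})"
        by (rule bdd_aboveI2[where M=L]) (auto intro: bdd)
      have "G r \<le> Sup (sum (aa \<gamma>) ` {F. finite F \<and> F \<subseteq> V})" for r
      proof -
        have fin: "finite {v. v \<subseteq> {1..r} \<and> u \<subseteq> v}"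
          by (rule finite_subset[of _ "Pow {1..r}"]) auto
        have "{v. v \<subseteq> {1..r} \<and> u \<subseteq> v} \<subseteq> V" unfolding V_def using sub_U[of _ r] by blast
        then show ?thesis unfolding G_def using fin by (intro cSup_upper[OF _ bddA]) blast
      qed
      then show "L \<le> Sup (sum (aa \<gamma>) ` {F. finite F \<and> F \<subseteq> V})"
        using L(1) by (intro LIMSEQ_le_const2) auto
    qed
    finally have "T_up C (T_down C \<gamma>) u = L" .
    then show ?thesis using c1 hL limh Lle unfolding convergent_def by auto
  qed
  show ?thesis using part1 part2 by blast
qed

end
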